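(* Let $\mathcal{H}$ be a finite-dimensional complex Hilbert space, let $s \geq 2$ be an integer and set $\epsilon = \frac{1}{s}$. Let $P_1, \ldots, P_s$ and $P$ be orthogonal projectors on $\mathcal{H}$ such that $P_i P_j = P_j P_i$ for all $i, j$, $P P_i = P$ for all $1 \leq i \leq s$, and $P_i P_j = P$ for all $i \neq j$. Then \[ \max_{\ket{\psi}} \Delta\left(P\ket{\psi}\bra{\psi}P,\ \frac{1}{s}\sum_{i=1}^{s} P_i \ket{\psi}\bra{\psi} P_i\right) \leq \sqrt{\epsilon}, \] where the maximum ranges over all unit vectors $\ket{\psi} \in \mathcal{H}$.
   Context: For (possibly subnormalised) positive semidefinite operators $\rho_0, \rho_1$ on $\mathcal{H}$, $\Delta(\rho_0,\rho_1) := \frac{1}{2}\lVert \rho_0 - \rho_1 \rVert_1$ denotes the trace-norm distance. In the paper's notation $P\ket{\psi}$ in the first argument of $\Delta$ stands for the (subnormalised) state $P\ket{\psi}\bra{\psi}P$. *)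

theory Defs
  imports "Jordan_Normal_Form.Schur_Decomposition" "HOL-Computational_Algebra.Polynomial"
begin

definition orth_proj :: "nat \<Rightarrow> complex mat \<Rightarrow> bool" where
  "orth_proj n P \<longleftrightarrow> P \<in> carrier_mat n n \<and> mat_adjoint P = P \<and> P * P = P"

definition unit_vec_c :: "nat \<Rightarrow> complex Matrix.vec \<Rightarrow> bool" where
  "unit_vec_c n v \<longleftrightarrow> v \<in> carrier_vec n \<and> conjugate v \<bullet> v = 1"

definition ketbra :: "complex Matrix.vec \<Rightarrow> complex mat" where
  "ketbra v = mat (dim_vec v) (dim_vec v) (\<lambda>(i,j). v $ i * cnj (v $ j))"

definition mat_sum :: "nat \<Rightarrow> ('i \<Rightarrow> complex mat) \<Rightarrow> 'i set \<Rightarrow> complex mat" where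
  "mat_sum n f I = mat n n (\<lambda>(i,j). \<Sum>k\<in>I. f k $$ (i,j))"

text \<open>Trace norm: sum of singular values, i.e. sum of the square roots of the eigenvalues
  (with algebraic multiplicity) of A^* A.\<close>
definition trace_norm :: "complex mat \<Rightarrow> real" where
  "trace_norm A = sum_mset (image_mset (\<lambda>z. sqrt (Re z)) (proots (char_poly (mat_adjoint A * A))))"

definition trace_dist :: "complex mat \<Rightarrow> complex mat \<Rightarrow> real" where
  "trace_dist A B = trace_norm (A - B) / 2"

end

theory Submission
  imports Defs
begin



lemma sylvester_char_poly:
  fixes A :: "'a::field mat"
  assumes A: "A \<in> carrier_mat n k" and B: "B \<in> carrier_mat k n"
  shows "[:0,1:]^k * char_poly (A*B) = [:0,1:]^n * char_poly (B*A)"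
proof -
  define x :: "'a poly" where "x = [:0,1:]"
  define A' where "A' = map_mat (\<lambda>a. [:a:]) A"
  define B' where "B' = map_mat (\<lambda>a. [:a:]) B"
  have A': "A' \<in> carrier_mat n k" and B': "B' \<in> carrier_mat k n" using A B by (auto simp: A'_def B'_def)
  define Mb where "Mb = four_block_mat (x \<cdot>\<^sub>m 1\<^sub>m n) A' B' (1\<^sub>m k)"
  define L where "L = four_block_mat (1\<^sub>m n) (0\<^sub>m n k) (-B') (x \<cdot>\<^sub>m 1\<^sub>m k)"
  define R where "R = four_block_mat (1\<^sub>m n) (-A') (0\<^sub>m k n) (1\<^sub>m k)"
  have Mb: "Mb \<in> carrier_mat (n+k) (n+k)" unfolding Mb_def using A' B' by auto
  have L: "L \<in> carrier_mat (n+k) (n+k)" unfolding L_def using A' B' by auto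
  have R: "R \<in> carrier_mat (n+k) (n+k)" unfolding R_def using A' B' by auto
  have LM: "L * Mb = four_block_mat (x \<cdot>\<^sub>m 1\<^sub>m n) A' (0\<^sub>m k n) (x \<cdot>\<^sub>m 1\<^sub>m k - B' * A')"
    unfolding L_def Mb_def
    apply (subst mult_four_block_mat[of _ n n _ k _ k _ _ n _ k])
    using A' B' by auto
  have RM: "R * Mb = four_block_mat (x \<cdot>\<^sub>m 1\<^sub>m n - A' * B') (0\<^sub>m n k) B' (1\<^sub>m k)"
    unfolding R_def Mb_def
    apply (subst mult_four_block_mat[of _ n n _ k _ k _ _ n _ k])
    using A' B' by auto
  have dL: "det L = x^k" unfolding L_def
    by (subst det_four_block_mat_upper_right_zero[of _ n], insert A' B', auto)
  have dR: "det R = 1" unfolding R_def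
    by (subst det_four_block_mat_lower_left_zero[of _ n], insert A' B', auto)
  have "det (L * Mb) = x^n * det (x \<cdot>\<^sub>m 1\<^sub>m k - B' * A')" unfolding LM
    by (subst det_four_block_mat_lower_left_zero[of _ n], insert A' B', auto)
  moreover have "det (L * Mb) = x^k * det Mb" using det_mult[OF L Mb] dL by simp
  moreover have "det (R * Mb) = det (x \<cdot>\<^sub>m 1\<^sub>m n - A' * B')" unfolding RM
    by (subst det_four_block_mat_upper_right_zero[of _ n], insert A' B', auto)
  moreover have "det (R * Mb) = det Mb" using det_mult[OF R Mb] dR by simp
  moreover have "char_poly (A*B) = det (x \<cdot>\<^sub>m 1\<^sub>m n - A' * B')"
  proof -
    have "char_poly_matrix (A*B) = x \<cdot>\<^sub>m 1\<^sub>m n - A' * B'"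
      unfolding char_poly_matrix_def x_def map_poly_mult[OF A B, folded A'_def B'_def, symmetric]
      using A B by (intro eq_matI, auto)
    thus ?thesis unfolding char_poly_def by simp
  qed
  moreover have "char_poly (B*A) = det (x \<cdot>\<^sub>m 1\<^sub>m k - B' * A')"
  proof -
    have "char_poly_matrix (B*A) = x \<cdot>\<^sub>m 1\<^sub>m k - B' * A'"
      unfolding char_poly_matrix_def x_def map_poly_mult[OF B A, folded A'_def B'_def, symmetric]
      using A B by (intro eq_matI, auto)
    thus ?thesis unfolding char_poly_def by simp
  qed
  ultimately show ?thesis unfolding x_def by simp
qed



definition tr :: "'a::comm_ring_1 mat \<Rightarrow> 'a" where
  "tr M = (\<Sum>i\<in>{0..<dim_row M}. M $$ (i,i))"

lemma tr_comm:
  fixes A :: "'a::comm_ring_1 mat"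
  assumes A: "A \<in> carrier_mat n m" and B: "B \<in> carrier_mat m n"
  shows "tr (A*B) = tr (B*A)"
proof -
  have "tr (A*B) = (\<Sum>i\<in>{0..<n}. \<Sum>l\<in>{0..<m}. A$$(i,l) * B$$(l,i))"
    unfolding tr_def using A B by (auto simp: scalar_prod_def intro!: sum.cong)
  also have "\<dots> = (\<Sum>l\<in>{0..<m}. \<Sum>i\<in>{0..<n}. B$$(l,i) * A$$(i,l))"
    by (subst sum.swap, simp add: mult.commute)
  also have "\<dots> = tr (B*A)"
    unfolding tr_def using A B by (auto simp: scalar_prod_def intro!: sum.cong)
  finally show ?thesis .
qed

lemma proots_lin: "proots (\<Prod>a\<leftarrow>as. [:- a, 1:]) = mset (as::'a::idom list)"
proof (induct as)
  case (Cons a as)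
  have nz: "(\<Prod>a\<leftarrow>as. [:- a, 1:]) \<noteq> 0" by (auto simp: prod_list_zero_iff)
  have "proots (\<Prod>a\<leftarrow>a#as. [:- a, 1:]) = proots ([:-a,1:] * (\<Prod>a\<leftarrow>as. [:- a, 1:]))" by simp
  also have "\<dots> = proots [:-a,1:] + proots (\<Prod>a\<leftarrow>as. [:- a, 1:])" by (rule proots_mult, auto simp: nz)
  also have "\<dots> = mset (a#as)" using Cons proots_linear_factor[of "-a"] by simp
  finally show ?case .
qed simp

lemma sum_proots_char_poly:
  fixes M :: "complex mat"
  assumes M: "M \<in> carrier_mat n n"
  shows "sum_mset (proots (char_poly M)) = tr M"
proof -
  obtain as where cp: "char_poly M = (\<Prod>a\<leftarrow>as. [:- a, 1:])" and len: "length as = n"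
    using char_poly_factorized[OF M] by blast
  have pr: "proots (char_poly M) = mset as"
    unfolding cp by (rule proots_lin)
  obtain B P Q where sd: "schur_decomposition M as = (B,P,Q)" by (cases "schur_decomposition M as", auto)
  from schur_decomposition[OF M cp sd] have sw: "similar_mat_wit M B P Q" and dg: "diag_mat B = as" by auto
  from sw M have Bc: "B \<in> carrier_mat n n" and Pc: "P \<in> carrier_mat n n" and Qc: "Q \<in> carrier_mat n n"
    and QP: "Q * P = 1\<^sub>m n" and MPBQ: "M = P * B * Q"
    unfolding similar_mat_wit_def Let_def by auto
  have "tr M = tr ((P * B) * Q)" using MPBQ by simp
  also have "\<dots> = tr (Q * (P * B))" by (rule tr_comm[of _ n n], insert Pc Bc Qc, auto)
  also have "Q * (P * B) = B" using QP Pc Bc Qc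
    by (metis assoc_mult_mat left_mult_one_mat)
  finally have "tr M = tr B" .
  also have "tr B = sum_list as" unfolding dg[symmetric] diag_mat_def tr_def
    by (simp add: interv_sum_list_conv_sum_set_nat)
  finally show ?thesis unfolding pr by (simp add: sum_mset_sum_list)
qed

lemma adjoint_index:
  assumes "i < dim_col A" "j < dim_row A"
  shows "mat_adjoint A $$ (i,j) = cnj (A $$ (j,i))"
  using assms unfolding mat_adjoint_def by (simp add: mat_of_rows_def)

lemma adjoint_dims[simp]: "dim_row (mat_adjoint A) = dim_col A" "dim_col (mat_adjoint A) = dim_row A"
  unfolding mat_adjoint_def by (auto simp: mat_of_rows_def)

lemma quad_swap:
  fixes v :: "nat \<Rightarrow> complex" and D :: "nat \<Rightarrow> nat \<Rightarrow> complex"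
  shows "(\<Sum>i\<in>I. cnj (v i) * (\<Sum>j\<in>J. (\<Sum>l\<in>L. cnj (D l i) * D l j) * v j))
       = (\<Sum>l\<in>L. cnj (\<Sum>i\<in>I. D l i * v i) * (\<Sum>j\<in>J. D l j * v j))"
proof -
  have "(\<Sum>i\<in>I. cnj (v i) * (\<Sum>j\<in>J. (\<Sum>l\<in>L. cnj (D l i) * D l j) * v j))
     = (\<Sum>i\<in>I. \<Sum>j\<in>J. \<Sum>l\<in>L. cnj (v i) * (cnj (D l i) * D l j * v j))"
    by (simp add: sum_distrib_left sum_distrib_right)
  also have "\<dots> = (\<Sum>i\<in>I. \<Sum>l\<in>L. \<Sum>j\<in>J. cnj (v i) * (cnj (D l i) * D l j * v j))"
    by (rule sum.cong[OF refl], rule sum.swap)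
  also have "\<dots> = (\<Sum>l\<in>L. \<Sum>i\<in>I. \<Sum>j\<in>J. cnj (v i) * (cnj (D l i) * D l j * v j))"
    by (rule sum.swap)
  also have "\<dots> = (\<Sum>l\<in>L. \<Sum>i\<in>I. \<Sum>j\<in>J. (cnj (D l i) * cnj (v i)) * (D l j * v j))"
    by (intro sum.cong refl) (simp add: ac_simps)
  also have "\<dots> = (\<Sum>l\<in>L. cnj (\<Sum>i\<in>I. D l i * v i) * (\<Sum>j\<in>J. D l j * v j))"
    by (simp add: sum_product)
  finally show ?thesis .
qed

lemma sum_cnj_sq: "(\<Sum>l\<in>L. cnj (f l) * f l) = complex_of_real (\<Sum>l\<in>L. (cmod (f l))^2)"
  unfolding of_real_sum by (intro sum.cong refl, subst complex_norm_square, simp add: mult.commute)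

lemma root_nonneg:
  fixes D :: "complex mat"
  assumes D: "D \<in> carrier_mat n n" and z: "z \<in># proots (char_poly (mat_adjoint D * D))"
  shows "Re z \<ge> 0"
proof -
  let ?M = "mat_adjoint D * D"
  have M: "?M \<in> carrier_mat n n" using D by auto
  have nz: "char_poly ?M \<noteq> 0" using degree_monic_char_poly[OF M] by auto
  have "poly (char_poly ?M) z = 0" using z set_count_proots[OF nz] by auto
  then have "eigenvalue ?M z" using eigenvalue_root_char_poly[OF M] by simp
  then obtain v where v: "v \<in> carrier_vec n" "v \<noteq> 0\<^sub>v n" "?M *\<^sub>v v = z \<cdot>\<^sub>v v"
    unfolding eigenvalue_def eigenvector_def using M by auto
  define w where "w = D *\<^sub>v v"
  have lhs: "(\<Sum>i\<in>{0..<n}. cnj (v$i) * (?M *\<^sub>v v) $ i) = z * (\<Sum>i\<in>{0..<n}. cnj (v$i) * v$i)"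
    using v by (simp add: sum_distrib_left mult.left_commute)
  have "(\<Sum>i\<in>{0..<n}. cnj (v$i) * (?M *\<^sub>v v) $ i)
      = (\<Sum>i\<in>{0..<n}. cnj (v$i) * (\<Sum>j\<in>{0..<n}. (\<Sum>l\<in>{0..<n}. cnj (D$$(l,i)) * D$$(l,j)) * v$j))"
    using v(1) D by (auto simp: scalar_prod_def adjoint_index intro!: sum.cong)
  also have "\<dots> = (\<Sum>l\<in>{0..<n}. cnj (\<Sum>i\<in>{0..<n}. D$$(l,i) * v$i) * (\<Sum>j\<in>{0..<n}. D$$(l,j) * v$j))"
    by (rule quad_swap)
  finally have rhs: "(\<Sum>i\<in>{0..<n}. cnj (v$i) * (?M *\<^sub>v v) $ i)
     = (\<Sum>l\<in>{0..<n}. cnj (\<Sum>i\<in>{0..<n}. D$$(l,i) * v$i) * (\<Sum>j\<in>{0..<n}. D$$(l,j) * v$j))" .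
  define r where "r = (\<Sum>l\<in>{0..<n}. (cmod (\<Sum>i\<in>{0..<n}. D$$(l,i) * v$i))^2)"
  define q where "q = (\<Sum>l\<in>{0..<n}. (cmod (v$l))^2)"
  have r: "(\<Sum>l\<in>{0..<n}. cnj (\<Sum>i\<in>{0..<n}. D$$(l,i) * v$i) * (\<Sum>j\<in>{0..<n}. D$$(l,j) * v$j)) = of_real r"
    unfolding r_def by (rule sum_cnj_sq)
  have q: "(\<Sum>i\<in>{0..<n}. cnj (v$i) * v$i) = of_real q"
    unfolding q_def by (rule sum_cnj_sq)
  have r0: "r \<ge> 0" unfolding r_def by (auto intro: sum_nonneg)
  obtain i where i: "i < n" "v $ i \<noteq> 0"
  proof (rule ccontr)
    assume "\<not> thesis"
    hence "\<forall>i<n. v $ i = 0" using that by blast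
    hence "v = 0\<^sub>v n" using v(1) by (intro eq_vecI) auto
    thus False using v(2) by simp
  qed
  have q0: "q > 0" unfolding q_def
    by (rule sum_pos2[of _ i], insert i, auto)
  have "z * of_real q = of_real r" using lhs rhs r q by simp
  hence "z = of_real (r / q)" using q0 by (simp add: field_simps)
  thus ?thesis using r0 q0 by simp
qed



lemma adjoint_mult:
  fixes A B :: "complex mat"
  assumes A: "A \<in> carrier_mat n m" and B: "B \<in> carrier_mat m k"
  shows "mat_adjoint (A*B) = mat_adjoint B * mat_adjoint A"
  using A B by (intro eq_matI) (auto simp: adjoint_index scalar_prod_def mult.commute intro!: sum.cong)

lemma herm_entry:
  fixes A :: "complex mat"
  assumes A: "A \<in> carrier_mat n n" and h: "mat_adjoint A = A" and i: "i < n" and j: "j < n"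
  shows "A $$ (i,j) = cnj (A $$ (j,i))"
proof -
  have "A $$ (i,j) = mat_adjoint A $$ (i,j)" using h by simp
  also have "\<dots> = cnj (A $$ (j,i))" using A i j by (simp add: adjoint_index)
  finally show ?thesis .
qed

definition innr :: "nat \<Rightarrow> complex vec \<Rightarrow> complex vec \<Rightarrow> complex" where
  "innr n u w = (\<Sum>l\<in>{0..<n}. cnj (u$l) * w$l)"

lemma herm_inner:
  fixes A B :: "complex mat"
  assumes A: "A \<in> carrier_mat n n" and h: "mat_adjoint A = A" and B: "B \<in> carrier_mat n n"
    and v: "v \<in> carrier_vec n"
  shows "innr n (A *\<^sub>v v) (B *\<^sub>v v) = innr n v ((A*B) *\<^sub>v v)"
proof -
  have "innr n v ((A*B) *\<^sub>v v) = innr n v (A *\<^sub>v (B *\<^sub>v v))"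
    using A B v by (simp add: assoc_mult_mat_vec)
  also have "\<dots> = (\<Sum>i\<in>{0..<n}. cnj (v$i) * (\<Sum>l\<in>{0..<n}. A$$(i,l) * (B *\<^sub>v v)$l))"
    unfolding innr_def using A B v by (auto simp: scalar_prod_def intro!: sum.cong)
  also have "\<dots> = (\<Sum>i\<in>{0..<n}. \<Sum>l\<in>{0..<n}. cnj (v$i) * A$$(i,l) * (B *\<^sub>v v)$l)"
    by (simp add: sum_distrib_left mult.assoc)
  also have "\<dots> = (\<Sum>l\<in>{0..<n}. \<Sum>i\<in>{0..<n}. cnj (v$i) * A$$(i,l) * (B *\<^sub>v v)$l)"
    by (rule sum.swap)
  also have "\<dots> = (\<Sum>l\<in>{0..<n}. cnj (\<Sum>i\<in>{0..<n}. A$$(l,i) * v$i) * (B *\<^sub>v v)$l)"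
  proof (intro sum.cong refl)
    fix l assume l: "l \<in> {0..<n}"
    have "(\<Sum>i\<in>{0..<n}. cnj (v$i) * A$$(i,l) * (B *\<^sub>v v)$l)
        = (\<Sum>i\<in>{0..<n}. cnj (A$$(l,i) * v$i)) * (B *\<^sub>v v)$l"
      unfolding sum_distrib_right
    proof (intro sum.cong refl)
      fix i assume i: "i \<in> {0..<n}"
      have e: "A$$(i,l) = cnj (A$$(l,i))" using herm_entry[OF A h, of i l] i l by simp
      show "cnj (v$i) * A$$(i,l) * (B *\<^sub>v v)$l = cnj (A$$(l,i) * v$i) * (B *\<^sub>v v)$l"
        unfolding e by simp
    qed
    thus "(\<Sum>i\<in>{0..<n}. cnj (v$i) * A$$(i,l) * (B *\<^sub>v v)$l)
        = cnj (\<Sum>i\<in>{0..<n}. A$$(l,i) * v$i) * (B *\<^sub>v v)$l" by simp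
  qed
  also have "\<dots> = innr n (A *\<^sub>v v) (B *\<^sub>v v)"
    unfolding innr_def using A v by (auto simp: scalar_prod_def intro!: sum.cong)
  finally show ?thesis by simp
qed

lemma innr_self:
  "innr n u u = complex_of_real (\<Sum>l\<in>{0..<n}. (cmod (u$l))^2)"
  unfolding innr_def of_real_sum by (intro sum.cong refl, subst complex_norm_square, simp add: mult.commute)

lemma proj_inner:
  fixes Q :: "complex mat"
  assumes Q: "Q \<in> carrier_mat n n" and h: "mat_adjoint Q = Q" and QQ: "Q * Q = Q"
    and v: "v \<in> carrier_vec n"
  shows "innr n v (Q *\<^sub>v v) = complex_of_real (\<Sum>l\<in>{0..<n}. (cmod ((Q *\<^sub>v v)$l))^2)"
  using herm_inner[OF Q h Q v] QQ innr_self by metis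

lemma ketbra_entry:
  fixes Q :: "complex mat"
  assumes Q: "Q \<in> carrier_mat n n" and h: "mat_adjoint Q = Q"
    and v: "v \<in> carrier_vec n" and i: "i < n" and j: "j < n"
  shows "(Q * ketbra v * Q) $$ (i,j) = (Q *\<^sub>v v)$i * cnj ((Q *\<^sub>v v)$j)"
proof -
  have K: "ketbra v \<in> carrier_mat n n" using v unfolding ketbra_def by auto
  have "(Q * ketbra v * Q) $$ (i,j) = (\<Sum>m\<in>{0..<n}. (\<Sum>l\<in>{0..<n}. Q$$(i,l) * (v$l * cnj (v$m))) * Q$$(m,j))"
    using Q K v i j by (auto simp: scalar_prod_def ketbra_def intro!: sum.cong)
  also have "\<dots> = (\<Sum>m\<in>{0..<n}. (\<Sum>l\<in>{0..<n}. Q$$(i,l) * v$l) * (cnj (v$m) * Q$$(m,j)))"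
    by (intro sum.cong refl) (simp add: sum_distrib_right mult.assoc)
  also have "\<dots> = (\<Sum>l\<in>{0..<n}. Q$$(i,l) * v$l) * (\<Sum>m\<in>{0..<n}. cnj (v$m) * Q$$(m,j))"
    by (rule sum_distrib_left[symmetric])
  also have "(\<Sum>l\<in>{0..<n}. Q$$(i,l) * v$l) = (Q *\<^sub>v v)$i"
    using Q v i by (simp add: scalar_prod_def)
  also have "(\<Sum>m\<in>{0..<n}. cnj (v$m) * Q$$(m,j)) = cnj ((Q *\<^sub>v v)$j)"
  proof -
    have "cnj ((Q *\<^sub>v v)$j) = (\<Sum>m\<in>{0..<n}. cnj (Q$$(j,m)) * cnj (v$m))"
      using Q v j by (simp add: scalar_prod_def)
    also have "\<dots> = (\<Sum>m\<in>{0..<n}. cnj (v$m) * Q$$(m,j))"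
    proof (intro sum.cong refl)
      fix m assume m: "m \<in> {0..<n}"
      have e: "Q$$(m,j) = cnj (Q$$(j,m))" using herm_entry[OF Q h, of m j] m j by simp
      show "cnj (Q$$(j,m)) * cnj (v$m) = cnj (v$m) * Q$$(m,j)" unfolding e by simp
    qed
    finally show ?thesis by simp
  qed
  finally show ?thesis .
qed




lemma cs_set:
  fixes g :: "nat \<Rightarrow> real"
  assumes "finite I"
  shows "(\<Sum>i\<in>I. g i)^2 \<le> real (card I) * (\<Sum>i\<in>I. (g i)^2)"
proof -
  have "(\<Sum>i\<in>I. g i)^2 = (\<Sum>i\<in>I. \<Sum>j\<in>I. g i * g j)" by (simp add: power2_eq_square sum_product)
  also have "\<dots> \<le> (\<Sum>i\<in>I. \<Sum>j\<in>I. ((g i)^2 + (g j)^2) / 2)"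
  proof (intro sum_mono)
    fix i j
    have "0 \<le> (g i - g j)^2" by simp
    thus "g i * g j \<le> ((g i)^2 + (g j)^2) / 2" by (simp add: power2_eq_square algebra_simps)
  qed
  also have "\<dots> = (\<Sum>i\<in>I. \<Sum>j\<in>I. (g i)^2 / 2) + (\<Sum>i\<in>I. \<Sum>j\<in>I. (g j)^2 / 2)"
    by (simp add: sum.distrib add_divide_distrib)
  also have "(\<Sum>i\<in>I. \<Sum>j\<in>I. (g i)^2 / 2) = real (card I) * (\<Sum>i\<in>I. (g i)^2) / 2"
    by (simp add: sum_distrib_left sum_divide_distrib mult.commute)
  also have "(\<Sum>i\<in>I. \<Sum>j\<in>I. (g j)^2 / 2) = real (card I) * (\<Sum>i\<in>I. (g i)^2) / 2"
    by (simp add: sum_divide_distrib[symmetric])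
  finally show ?thesis by simp
qed

lemma cs_mset:
  fixes g :: "'a \<Rightarrow> real"
  shows "(sum_mset (image_mset g A))^2 \<le> real (size A) * sum_mset (image_mset (\<lambda>z. (g z)^2) A)"
proof -
  obtain xs where A: "A = mset xs" by (metis ex_mset)
  have e1: "sum_mset (image_mset g A) = (\<Sum>i\<in>{0..<length xs}. g (xs!i))"
    unfolding A mset_map[symmetric] sum_mset_sum_list sum_list_sum_nth by simp
  have e2: "sum_mset (image_mset (\<lambda>z. (g z)^2) A) = (\<Sum>i\<in>{0..<length xs}. (g (xs!i))^2)"
    unfolding A mset_map[symmetric] sum_mset_sum_list sum_list_sum_nth by simp
  show ?thesis unfolding e1 e2 using cs_set[of "{0..<length xs}" "\<lambda>i. g (xs!i)"] A by simp
qed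

lemma sum_mset_zero_part:
  assumes "\<And>z. z \<in># A \<Longrightarrow> f z = (0::real)"
  shows "sum_mset (image_mset f A) = 0"
  using assms by (induct A) auto

lemma sum_mset_split_nz:
  fixes f :: "complex \<Rightarrow> real"
  assumes "f 0 = 0"
  shows "sum_mset (image_mset f A) = sum_mset (image_mset f (filter_mset (\<lambda>z. z \<noteq> 0) A))"
proof -
  have "sum_mset (image_mset f A) = sum_mset (image_mset f (filter_mset (\<lambda>z. z \<noteq> 0) A))
     + sum_mset (image_mset f (filter_mset (\<lambda>z. \<not> z \<noteq> 0) A))"
  proof -
    have p: "filter_mset (\<lambda>z. z \<noteq> 0) A + filter_mset (\<lambda>z. \<not> z \<noteq> 0) A = A"
      by (rule multiset_partition[symmetric])
    have "sum_mset (image_mset f A) = sum_mset (image_mset f (filter_mset (\<lambda>z. z \<noteq> 0) A + filter_mset (\<lambda>z. \<not> z \<noteq> 0) A))"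
      by (simp only: p)
    thus ?thesis by (simp only: image_mset_union sum_mset.union)
  qed
  also have "sum_mset (image_mset f (filter_mset (\<lambda>z. \<not> z \<noteq> 0) A)) = 0"
    by (rule sum_mset_zero_part, insert assms, auto)
  finally show ?thesis by simp
qed

lemma sum_mset_nonneg':
  assumes "\<And>z. z \<in># A \<Longrightarrow> f z \<ge> (0::real)"
  shows "sum_mset (image_mset f A) \<ge> 0"
  using assms by (induct A) auto

lemma Re_sum_mset: "Re (sum_mset A) = sum_mset (image_mset Re A)"
  by (induct A) auto

lemma nz_count:
  fixes A :: "complex mat"
  assumes A: "A \<in> carrier_mat n k" and B: "B \<in> carrier_mat k n"
  shows "size (filter_mset (\<lambda>z. z \<noteq> 0) (proots (char_poly (A*B)))) \<le> k"
proof -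
  have AB: "A * B \<in> carrier_mat n n" and BA: "B * A \<in> carrier_mat k k" using A B by auto
  have c1: "char_poly (A*B) \<noteq> 0" using degree_monic_char_poly[OF AB] by auto
  have c2: "char_poly (B*A) \<noteq> 0" using degree_monic_char_poly[OF BA] by auto
  have x: "\<And>m. ([:0,1:] :: complex poly)^m \<noteq> 0" by simp
  have px: "\<And>m. proots (([:0,1:] :: complex poly)^m) = repeat_mset m {#0#}"
    using proots_linear_factor[of "0::complex"] by (simp add: proots_power)
  have fz: "\<And>m. filter_mset (\<lambda>z. z \<noteq> 0) (repeat_mset m {#0::complex#}) = {#}"
    by (induct_tac m, auto)
  have "proots ([:0,1:]^k * char_poly (A*B)) = proots ([:0,1:]^n * char_poly (B*A))"
    using sylvester_char_poly[OF A B] by simp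
  hence "repeat_mset k {#0#} + proots (char_poly (A*B)) = repeat_mset n {#0#} + proots (char_poly (B*A))"
    using c1 c2 x by (simp add: proots_mult px)
  hence "filter_mset (\<lambda>z. z \<noteq> 0) (proots (char_poly (A*B))) = filter_mset (\<lambda>z. z \<noteq> 0) (proots (char_poly (B*A)))"
    by (metis filter_union_mset fz add_0)
  hence "size (filter_mset (\<lambda>z. z \<noteq> 0) (proots (char_poly (A*B)))) \<le> size (proots (char_poly (B*A)))"
    by (metis size_filter_mset_lesseq)
  also have "\<dots> \<le> degree (char_poly (B*A))" by (rule size_proots_le)
  also have "\<dots> = k" using degree_monic_char_poly[OF BA] by auto
  finally show ?thesis .
qed

lemma trace_norm_bound:
  fixes D X Y :: "complex mat"
  assumes D: "D \<in> carrier_mat n n" and X: "X \<in> carrier_mat n k" and Y: "Y \<in> carrier_mat k n"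
    and DXY: "D = X * Y"
  shows "(trace_norm D)^2 \<le> real k * Re (tr (mat_adjoint D * D))" "trace_norm D \<ge> 0"
proof -
  let ?M = "mat_adjoint D * D"
  let ?R = "proots (char_poly ?M)"
  let ?R' = "filter_mset (\<lambda>z. z \<noteq> 0) ?R"
  have Mc: "?M \<in> carrier_mat n n" using D by auto
  have A': "mat_adjoint D * X \<in> carrier_mat n k" using D X by auto
  have Meq: "?M = (mat_adjoint D * X) * Y" unfolding DXY using X Y
    by (metis DXY D adjoint_dims carrier_matD assoc_mult_mat carrier_matI)
  have sz: "size ?R' \<le> k" unfolding Meq by (rule nz_count[OF A' Y])
  have nn: "\<And>z. z \<in># ?R \<Longrightarrow> Re z \<ge> 0" using root_nonneg[OF D] by blast
  have tn: "trace_norm D = sum_mset (image_mset (\<lambda>z. sqrt (Re z)) ?R')"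
    unfolding trace_norm_def by (rule sum_mset_split_nz, simp)
  have sq: "sum_mset (image_mset (\<lambda>z. (sqrt (Re z))^2) ?R') = sum_mset (image_mset Re ?R')"
    by (rule arg_cong[where f = sum_mset], rule image_mset_cong, insert nn, auto)
  have tr: "sum_mset (image_mset Re ?R') = Re (tr ?M)"
  proof -
    have "sum_mset (image_mset Re ?R') = sum_mset (image_mset Re ?R)"
      by (rule sum_mset_split_nz[symmetric], simp)
    also have "\<dots> = Re (sum_mset ?R)" by (simp add: Re_sum_mset)
    also have "\<dots> = Re (tr ?M)" using sum_proots_char_poly[OF Mc] by simp
    finally show ?thesis .
  qed
  have tr0: "Re (tr ?M) \<ge> 0" unfolding tr[symmetric]
    by (rule sum_mset_nonneg', insert nn, auto)
  have "(trace_norm D)^2 \<le> real (size ?R') * Re (tr ?M)"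
    unfolding tn using cs_mset[of "\<lambda>z. sqrt (Re z)" ?R'] sq tr by simp
  also have "\<dots> \<le> real k * Re (tr ?M)" using sz tr0 by (intro mult_right_mono) auto
  finally show "(trace_norm D)^2 \<le> real k * Re (tr (mat_adjoint D * D))" .
  show "trace_norm D \<ge> 0" unfolding tn by (rule sum_mset_nonneg', insert nn, auto)
qed



lemma tr_rank_sum:
  fixes X :: "nat \<Rightarrow> nat \<Rightarrow> complex" and c :: "nat \<Rightarrow> complex"
  shows "(\<Sum>i\<in>N. \<Sum>l\<in>N. cnj (\<Sum>k\<in>K. c k * X k l * cnj (X k i)) * (\<Sum>k\<in>K. c k * X k l * cnj (X k i)))
   = (\<Sum>k\<in>K. \<Sum>k'\<in>K. cnj (c k) * c k' * (\<Sum>l\<in>N. cnj (X k l) * X k' l) * cnj (\<Sum>l\<in>N. cnj (X k l) * X k' l))"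
proof -
  have "(\<Sum>i\<in>N. \<Sum>l\<in>N. cnj (\<Sum>k\<in>K. c k * X k l * cnj (X k i)) * (\<Sum>k\<in>K. c k * X k l * cnj (X k i)))
     = (\<Sum>i\<in>N. \<Sum>l\<in>N. \<Sum>k\<in>K. \<Sum>k'\<in>K. (cnj (c k) * cnj (X k l) * X k i) * (c k' * X k' l * cnj (X k' i)))"
    by (simp add: sum_product)
  also have "\<dots> = (\<Sum>i\<in>N. \<Sum>k\<in>K. \<Sum>l\<in>N. \<Sum>k'\<in>K. (cnj (c k) * cnj (X k l) * X k i) * (c k' * X k' l * cnj (X k' i)))"
    by (rule sum.cong[OF refl], rule sum.swap)
  also have "\<dots> = (\<Sum>i\<in>N. \<Sum>k\<in>K. \<Sum>k'\<in>K. \<Sum>l\<in>N. (cnj (c k) * cnj (X k l) * X k i) * (c k' * X k' l * cnj (X k' i)))"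
    by (rule sum.cong[OF refl], rule sum.cong[OF refl], rule sum.swap)
  also have "\<dots> = (\<Sum>k\<in>K. \<Sum>i\<in>N. \<Sum>k'\<in>K. \<Sum>l\<in>N. (cnj (c k) * cnj (X k l) * X k i) * (c k' * X k' l * cnj (X k' i)))"
    by (rule sum.swap)
  also have "\<dots> = (\<Sum>k\<in>K. \<Sum>k'\<in>K. \<Sum>i\<in>N. \<Sum>l\<in>N. (cnj (c k) * cnj (X k l) * X k i) * (c k' * X k' l * cnj (X k' i)))"
    by (rule sum.cong[OF refl], rule sum.swap)
  also have "\<dots> = (\<Sum>k\<in>K. \<Sum>k'\<in>K. \<Sum>i\<in>N. \<Sum>l\<in>N. (cnj (c k) * c k') * ((cnj (X k l) * X k' l) * (X k i * cnj (X k' i))))"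
    by (intro sum.cong refl) (simp add: ac_simps)
  also have "\<dots> = (\<Sum>k\<in>K. \<Sum>k'\<in>K. \<Sum>l\<in>N. \<Sum>i\<in>N. (cnj (c k) * c k') * ((cnj (X k l) * X k' l) * (X k i * cnj (X k' i))))"
    by (rule sum.cong[OF refl], rule sum.cong[OF refl], rule sum.swap)
  also have "\<dots> = (\<Sum>k\<in>K. \<Sum>k'\<in>K. (cnj (c k) * c k') * ((\<Sum>l\<in>N. cnj (X k l) * X k' l) * (\<Sum>i\<in>N. X k i * cnj (X k' i))))"
    unfolding sum_product by (simp only: sum_distrib_left)
  also have "\<dots> = (\<Sum>k\<in>K. \<Sum>k'\<in>K. cnj (c k) * c k' * (\<Sum>l\<in>N. cnj (X k l) * X k' l) * cnj (\<Sum>l\<in>N. cnj (X k l) * X k' l))"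
    by (intro sum.cong refl) (simp add: mult.assoc)
  finally show ?thesis .
qed

lemma alg_A1:
  fixes a b c d :: "nat \<Rightarrow> complex"
  shows "(\<Sum>l\<in>N. cnj (a l - e * b l) * (c l - e' * d l)) =
    (\<Sum>l\<in>N. cnj (a l) * c l) - e' * (\<Sum>l\<in>N. cnj (a l) * d l) - cnj e * (\<Sum>l\<in>N. cnj (b l) * c l)
    + cnj e * e' * (\<Sum>l\<in>N. cnj (b l) * d l)"
  by (simp add: algebra_simps sum.distrib sum_subtractf sum_distrib_left)

lemma alg_A2:
  fixes p :: "nat \<Rightarrow> complex" and y :: "nat \<Rightarrow> nat \<Rightarrow> complex"
  shows "(\<Sum>l\<in>N. cnj (p l - (\<Sum>k\<in>K. y k l)) * (p l - (\<Sum>k\<in>K. y k l))) =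
    (\<Sum>l\<in>N. cnj (p l) * p l) - (\<Sum>k\<in>K. \<Sum>l\<in>N. cnj (p l) * y k l) - (\<Sum>k\<in>K. \<Sum>l\<in>N. cnj (y k l) * p l)
    + (\<Sum>k\<in>K. \<Sum>k'\<in>K. \<Sum>l\<in>N. cnj (y k l) * y k' l)"
proof -
  have 1: "(\<Sum>l\<in>N. cnj (p l - (\<Sum>k\<in>K. y k l)) * (p l - (\<Sum>k\<in>K. y k l))) =
    (\<Sum>l\<in>N. cnj (p l) * p l) - (\<Sum>l\<in>N. \<Sum>k\<in>K. cnj (p l) * y k l) - (\<Sum>l\<in>N. \<Sum>k\<in>K. cnj (y k l) * p l)
    + (\<Sum>l\<in>N. \<Sum>k\<in>K. \<Sum>k'\<in>K. cnj (y k l) * y k' l)"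
    by (simp add: algebra_simps sum.distrib sum_subtractf sum_distrib_left sum_distrib_right)
  have 2: "(\<Sum>l\<in>N. \<Sum>k\<in>K. \<Sum>k'\<in>K. cnj (y k l) * y k' l) = (\<Sum>k\<in>K. \<Sum>k'\<in>K. \<Sum>l\<in>N. cnj (y k l) * y k' l)"
    by (subst sum.swap, rule sum.cong[OF refl], rule sum.swap)
  show ?thesis unfolding 1 2 by (simp add: sum.swap[of _ N K])
qed


lemma real_dsum:
  fixes c w :: "nat \<Rightarrow> real"
  shows "(\<Sum>k\<in>K. \<Sum>k'\<in>K. c k * c k' * (a + (if k = k' then w k else 0))^2)
     = a^2 * (\<Sum>k\<in>K. c k)^2 + (\<Sum>k\<in>K. (c k)^2 * (2*a*w k + (w k)^2))"
proof (cases "finite K")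
  case True
  have "(\<Sum>k\<in>K. \<Sum>k'\<in>K. c k * c k' * (a + (if k = k' then w k else 0))^2)
     = (\<Sum>k\<in>K. \<Sum>k'\<in>K. a^2 * (c k * c k') + (if k = k' then (c k)^2 * (2*a*w k + (w k)^2) else 0))"
    by (intro sum.cong refl) (auto simp: power2_eq_square algebra_simps)
  also have "\<dots> = (\<Sum>k\<in>K. \<Sum>k'\<in>K. a^2 * (c k * c k')) + (\<Sum>k\<in>K. (c k)^2 * (2*a*w k + (w k)^2))"
    using True by (simp add: sum.distrib)
  also have "(\<Sum>k\<in>K. \<Sum>k'\<in>K. a^2 * (c k * c k')) = a^2 * (\<Sum>k\<in>K. \<Sum>k'\<in>K. c k * c k')"
    by (simp add: sum_distrib_left)
  also have "(\<Sum>k\<in>K. \<Sum>k'\<in>K. c k * c k') = (\<Sum>k\<in>K. c k)^2"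
    by (simp add: power2_eq_square sum_product)
  finally show ?thesis .
qed simp

lemma sq_sum_le:
  fixes w :: "nat \<Rightarrow> real"
  assumes "finite K" "\<And>k. k \<in> K \<Longrightarrow> w k \<ge> 0"
  shows "(\<Sum>k\<in>K. (w k)^2) \<le> (\<Sum>k\<in>K. w k)^2"
proof -
  have "(\<Sum>k\<in>K. (w k)^2) \<le> (\<Sum>k\<in>K. w k * (\<Sum>j\<in>K. w j))"
  proof (rule sum_mono)
    fix k assume k: "k \<in> K"
    have "w k \<le> (\<Sum>j\<in>K. w j)" using assms k by (intro member_le_sum) auto
    thus "(w k)^2 \<le> w k * (\<Sum>j\<in>K. w j)" using assms(2)[OF k] by (simp add: power2_eq_square mult_left_mono)
  qed
  also have "\<dots> = (\<Sum>k\<in>K. w k)^2" by (simp add: power2_eq_square sum_distrib_right)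
  finally show ?thesis .
qed


context
  fixes n s :: nat and Ps :: "nat \<Rightarrow> complex mat" and P :: "complex mat" and \<psi> :: "complex vec"
  assumes s2: "s \<ge> 2"
    and PsP: "\<And>i. i \<in> {1..s} \<Longrightarrow> orth_proj n (Ps i)"
    and PP: "orth_proj n P"
    and PPs: "\<And>i. i \<in> {1..s} \<Longrightarrow> P * Ps i = P"
    and PsPs: "\<And>i j. i \<in> {1..s} \<Longrightarrow> j \<in> {1..s} \<Longrightarrow> i \<noteq> j \<Longrightarrow> Ps i * Ps j = P"
    and psi: "unit_vec_c n \<psi>"
begin

definition Qm :: "nat \<Rightarrow> complex mat" where "Qm k = (if k = 0 then P else Ps k)"
definition xv :: "nat \<Rightarrow> complex vec" where "xv k = Qm k *\<^sub>v \<psi>"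
definition cr :: "nat \<Rightarrow> real" where "cr k = (if k = 0 then 1 else - 1 / real s)"
definition Dm :: "complex mat" where
  "Dm = P * ketbra \<psi> * P - (1 / of_nat s) \<cdot>\<^sub>m mat_sum n (\<lambda>i. Ps i * ketbra \<psi> * Ps i) {1..s}"

lemma psi_c: "\<psi> \<in> carrier_vec n" using psi unfolding unit_vec_c_def by auto

lemma Qm_props: assumes "k \<in> {0..s}"
  shows "Qm k \<in> carrier_mat n n" "mat_adjoint (Qm k) = Qm k" "Qm k * Qm k = Qm k"
  using assms PsP[of k] PP unfolding Qm_def orth_proj_def by (cases "k = 0", auto)+

lemma Dm_c: "Dm \<in> carrier_mat n n"
  using PP psi_c unfolding Dm_def mat_sum_def orth_proj_def ketbra_def by auto

lemma Dm_entry: assumes i: "i < n" and j: "j < n"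
  shows "Dm $$ (i,j) = (\<Sum>k\<in>{0..s}. of_real (cr k) * (xv k)$i * cnj ((xv k)$j))"
proof -
  have K: "ketbra \<psi> \<in> carrier_mat n n" using psi_c unfolding ketbra_def by auto
  have PK: "(P * ketbra \<psi> * P) $$ (i,j) = (xv 0)$i * cnj ((xv 0)$j)"
    using ketbra_entry[OF _ _ psi_c i j, of P] PP unfolding xv_def Qm_def orth_proj_def by auto
  have PsK: "(Ps k * ketbra \<psi> * Ps k) $$ (i,j) = (xv k)$i * cnj ((xv k)$j)" if k: "k \<in> {1..s}" for k
    using ketbra_entry[OF _ _ psi_c i j, of "Ps k"] PsP[OF k] k unfolding xv_def Qm_def orth_proj_def by auto
  have "Dm $$ (i,j) = (P * ketbra \<psi> * P) $$ (i,j) - (1 / of_nat s) * (\<Sum>k\<in>{1..s}. (Ps k * ketbra \<psi> * Ps k) $$ (i,j))"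
    unfolding Dm_def mat_sum_def using i j PP K unfolding orth_proj_def by auto
  also have "\<dots> = (xv 0)$i * cnj ((xv 0)$j) + (\<Sum>k\<in>{1..s}. of_real (cr k) * (xv k)$i * cnj ((xv k)$j))"
    unfolding PK by (simp add: PsK sum_distrib_left cr_def sum_negf[symmetric] mult.assoc)
  also have "\<dots> = (\<Sum>k\<in>{0..s}. of_real (cr k) * (xv k)$i * cnj ((xv k)$j))"
    by (simp add: sum.atLeast_Suc_atMost cr_def)
  finally show ?thesis .
qed

definition Xm :: "complex mat" where "Xm = mat n (Suc s) (\<lambda>(i,k). (xv k)$i)"
definition Ym :: "complex mat" where "Ym = mat (Suc s) n (\<lambda>(k,j). of_real (cr k) * cnj ((xv k)$j))"

lemma Dm_factor: "Dm = Xm * Ym"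
proof (rule eq_matI)
  fix i j assume i: "i < dim_row (Xm * Ym)" and j: "j < dim_col (Xm * Ym)"
  hence i: "i < n" and j: "j < n" unfolding Xm_def Ym_def by auto
  have "(Xm * Ym) $$ (i,j) = (\<Sum>k\<in>{0..<Suc s}. (xv k)$i * (of_real (cr k) * cnj ((xv k)$j)))"
    using i j unfolding Xm_def Ym_def by (auto simp: scalar_prod_def intro!: sum.cong)
  also have "\<dots> = Dm $$ (i,j)" unfolding Dm_entry[OF i j] atLeastLessThanSuc_atLeastAtMost
    by (intro sum.cong refl) (simp add: ac_simps)
  finally show "Dm $$ (i,j) = (Xm * Ym) $$ (i,j)" ..
qed (insert Dm_c, auto simp: Xm_def Ym_def)

lemma tr_formula: "tr (mat_adjoint Dm * Dm) = (\<Sum>k\<in>{0..s}. \<Sum>k'\<in>{0..s}. cnj (of_real (cr k)) * of_real (cr k') *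
     innr n (xv k) (xv k') * cnj (innr n (xv k) (xv k')))"
proof -
  have "tr (mat_adjoint Dm * Dm) = (\<Sum>i\<in>{0..<n}. \<Sum>l\<in>{0..<n}. cnj (Dm $$ (l,i)) * Dm $$ (l,i))"
    unfolding tr_def using Dm_c by (auto simp: scalar_prod_def adjoint_index intro!: sum.cong)
  also have "\<dots> = (\<Sum>i\<in>{0..<n}. \<Sum>l\<in>{0..<n}.
      cnj (\<Sum>k\<in>{0..s}. of_real (cr k) * (xv k)$l * cnj ((xv k)$i)) * (\<Sum>k\<in>{0..s}. of_real (cr k) * (xv k)$l * cnj ((xv k)$i)))"
    by (intro sum.cong refl) (simp add: Dm_entry)
  also have "\<dots> = (\<Sum>k\<in>{0..s}. \<Sum>k'\<in>{0..s}. cnj (of_real (cr k)) * of_real (cr k') *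
     (\<Sum>l\<in>{0..<n}. cnj ((xv k)$l) * (xv k')$l) * cnj (\<Sum>l\<in>{0..<n}. cnj ((xv k)$l) * (xv k')$l))"
    by (rule tr_rank_sum)
  finally show ?thesis unfolding innr_def .
qed

lemma PsP_eq: assumes k: "k \<in> {1..s}" shows "Ps k * P = P"
proof -
  have c: "P \<in> carrier_mat n n" "Ps k \<in> carrier_mat n n" "mat_adjoint P = P" "mat_adjoint (Ps k) = Ps k"
    using PP PsP[OF k] unfolding orth_proj_def by auto
  have "Ps k * P = mat_adjoint (P * Ps k)" using adjoint_mult[OF c(1) c(2)] c by simp
  also have "\<dots> = P" using PPs[OF k] c by simp
  finally show ?thesis .
qed

lemma Qm_prod: assumes k: "k \<in> {0..s}" and k': "k' \<in> {0..s}"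
  shows "Qm k * Qm k' = (if k = k' then Qm k else P)"
proof (cases "k = k'")
  case True thus ?thesis using Qm_props(3)[OF k] by simp
next
  case False
  show ?thesis
  proof (cases "k = 0")
    case True thus ?thesis using False k' PPs[of k'] unfolding Qm_def by auto
  next
    case k0: False
    show ?thesis
    proof (cases "k' = 0")
      case True thus ?thesis using False k k0 PsP_eq[of k] unfolding Qm_def by auto
    next
      case False thus ?thesis using \<open>k \<noteq> k'\<close> k k' k0 PsPs[of k k'] unfolding Qm_def by auto
    qed
  qed
qed

definition av :: complex where "av = innr n \<psi> (P *\<^sub>v \<psi>)"
definition pv :: "nat \<Rightarrow> complex" where "pv k = innr n \<psi> (Ps k *\<^sub>v \<psi>)"

lemma gram: assumes k: "k \<in> {0..s}" and k': "k' \<in> {0..s}"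
  shows "innr n (xv k) (xv k') = av + (if k = k' \<and> k \<noteq> 0 then pv k - av else 0)"
proof -
  have "innr n (xv k) (xv k') = innr n \<psi> ((Qm k * Qm k') *\<^sub>v \<psi>)"
    unfolding xv_def by (rule herm_inner[OF Qm_props(1,2)[OF k] Qm_props(1)[OF k'] psi_c])
  also have "\<dots> = av + (if k = k' \<and> k \<noteq> 0 then pv k - av else 0)"
    unfolding Qm_prod[OF k k'] by (auto simp: av_def pv_def Qm_def)
  finally show ?thesis .
qed

lemma innr_psi_Q: assumes k: "k \<in> {0..s}"
  shows "innr n \<psi> (xv k) = (if k = 0 then av else pv k)"
  unfolding xv_def Qm_def av_def pv_def by auto

lemma innr_Q_psi: assumes k: "k \<in> {0..s}"
  shows "innr n (xv k) \<psi> = (if k = 0 then av else pv k)"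
proof -
  have "innr n (xv k) \<psi> = innr n (Qm k *\<^sub>v \<psi>) (1\<^sub>m n *\<^sub>v \<psi>)" unfolding xv_def using psi_c by simp
  also have "\<dots> = innr n \<psi> ((Qm k * 1\<^sub>m n) *\<^sub>v \<psi>)"
    by (rule herm_inner[OF Qm_props(1,2)[OF k] _ psi_c], simp)
  also have "\<dots> = innr n \<psi> (xv k)" unfolding xv_def using Qm_props(1)[OF k] by simp
  finally show ?thesis using innr_psi_Q[OF k] by simp
qed

definition ef :: "nat \<Rightarrow> complex" where "ef k = (if k = 0 then 0 else 1)"
definition yf :: "nat \<Rightarrow> nat \<Rightarrow> complex" where "yf k l = (xv k)$l - ef k * (xv 0)$l"
definition Yv :: "nat \<Rightarrow> nat \<Rightarrow> complex" where
  "Yv k k' = (if k = k' then (if k = 0 then av else pv k - av) else 0)"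

lemma innr_y: assumes k: "k \<in> {0..s}" and k': "k' \<in> {0..s}"
  shows "(\<Sum>l\<in>{0..<n}. cnj (yf k l) * yf k' l) = Yv k k'"
proof -
  have z: "0 \<in> {0..s}" by simp
  have "(\<Sum>l\<in>{0..<n}. cnj (yf k l) * yf k' l) = innr n (xv k) (xv k') - ef k' * innr n (xv k) (xv 0)
     - cnj (ef k) * innr n (xv 0) (xv k') + cnj (ef k) * ef k' * innr n (xv 0) (xv 0)"
    unfolding yf_def innr_def by (rule alg_A1)
  also have "\<dots> = Yv k k'"
    unfolding gram[OF k k'] gram[OF k z] gram[OF z k'] gram[OF z z] using k k'
    by (auto simp: ef_def Yv_def)
  finally show ?thesis .
qed

lemma innr_psi_y: assumes k: "k \<in> {0..s}"
  shows "(\<Sum>l\<in>{0..<n}. cnj (\<psi>$l) * yf k l) = Yv k k"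
proof -
  have z: "0 \<in> {0..s}" by simp
  have "(\<Sum>l\<in>{0..<n}. cnj (\<psi>$l) * yf k l) = (\<Sum>l\<in>{0..<n}. cnj (\<psi>$l - 0 * \<psi>$l) * ((xv k)$l - ef k * (xv 0)$l))"
    unfolding yf_def by simp
  also have "\<dots> = innr n \<psi> (xv k) - ef k * innr n \<psi> (xv 0) - cnj 0 * innr n \<psi> (xv k) + cnj 0 * ef k * innr n \<psi> (xv 0)"
    unfolding innr_def by (rule alg_A1)
  also have "\<dots> = Yv k k" unfolding innr_psi_Q[OF k] innr_psi_Q[OF z] by (auto simp: ef_def Yv_def)
  finally show ?thesis .
qed

lemma innr_y_psi: assumes k: "k \<in> {0..s}"
  shows "(\<Sum>l\<in>{0..<n}. cnj (yf k l) * \<psi>$l) = Yv k k"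
proof -
  have z: "0 \<in> {0..s}" by simp
  have "(\<Sum>l\<in>{0..<n}. cnj (yf k l) * \<psi>$l) = (\<Sum>l\<in>{0..<n}. cnj ((xv k)$l - ef k * (xv 0)$l) * (\<psi>$l - 0 * \<psi>$l))"
    unfolding yf_def by simp
  also have "\<dots> = innr n (xv k) \<psi> - 0 * innr n (xv k) \<psi> - cnj (ef k) * innr n (xv 0) \<psi> + cnj (ef k) * 0 * innr n (xv 0) \<psi>"
    unfolding innr_def by (rule alg_A1)
  also have "\<dots> = Yv k k" unfolding innr_Q_psi[OF k] innr_Q_psi[OF z] by (auto simp: ef_def Yv_def)
  finally show ?thesis .
qed

lemma psi_norm: "(\<Sum>l\<in>{0..<n}. cnj (\<psi>$l) * \<psi>$l) = 1"
  using psi unfolding unit_vec_c_def by (auto simp: scalar_prod_def)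

lemma bessel_c: "1 - (\<Sum>k\<in>{0..s}. Yv k k) = of_real (\<Sum>l\<in>{0..<n}. (cmod (\<psi>$l - (\<Sum>k\<in>{0..s}. yf k l)))^2)"
proof -
  have "(\<Sum>l\<in>{0..<n}. cnj (\<psi>$l - (\<Sum>k\<in>{0..s}. yf k l)) * (\<psi>$l - (\<Sum>k\<in>{0..s}. yf k l)))
     = 1 - (\<Sum>k\<in>{0..s}. Yv k k) - (\<Sum>k\<in>{0..s}. Yv k k) + (\<Sum>k\<in>{0..s}. \<Sum>k'\<in>{0..s}. Yv k k')"
  proof -
    have e1: "(\<Sum>k\<in>{0..s}. \<Sum>k'\<in>{0..s}. \<Sum>l\<in>{0..<n}. cnj (yf k l) * yf k' l) = (\<Sum>k\<in>{0..s}. \<Sum>k'\<in>{0..s}. Yv k k')"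
      using innr_y by (auto intro!: sum.cong)
    have e2: "(\<Sum>k\<in>{0..s}. \<Sum>l\<in>{0..<n}. cnj (yf k l) * \<psi>$l) = (\<Sum>k\<in>{0..s}. Yv k k)"
      using innr_y_psi by (auto intro!: sum.cong)
    have e3: "(\<Sum>k\<in>{0..s}. \<Sum>l\<in>{0..<n}. cnj (\<psi>$l) * yf k l) = (\<Sum>k\<in>{0..s}. Yv k k)"
      using innr_psi_y by (auto intro!: sum.cong)
    show ?thesis unfolding alg_A2 psi_norm e1 e2 e3 by simp
  qed
  also have "(\<Sum>k\<in>{0..s}. \<Sum>k'\<in>{0..s}. Yv k k') = (\<Sum>k\<in>{0..s}. Yv k k)"
    unfolding Yv_def by (auto intro!: sum.cong)
  finally show ?thesis using sum_cnj_sq[of "\<lambda>l. \<psi>$l - (\<Sum>k\<in>{0..s}. yf k l)" "{0..<n}"] by simp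
qed

definition ar :: real where "ar = Re av"
definition wr :: "nat \<Rightarrow> real" where "wr k = (if k = 0 then 0 else Re (pv k) - ar)"

lemma av_real: "av = of_real ar" "ar \<ge> 0"
proof -
  have "av = of_real (\<Sum>l\<in>{0..<n}. (cmod ((P *\<^sub>v \<psi>)$l))^2)"
    unfolding av_def using proj_inner[of P n \<psi>] PP psi_c unfolding orth_proj_def by auto
  thus "av = of_real ar" "ar \<ge> 0" unfolding ar_def by (auto intro: sum_nonneg)
qed

lemma pv_real: assumes k: "k \<in> {1..s}" shows "pv k - av = of_real (wr k)" "wr k \<ge> 0"
proof -
  have k': "k \<in> {0..s}" using k by auto
  have "pv k - av = Yv k k" using k unfolding Yv_def by auto
  also have "\<dots> = (\<Sum>l\<in>{0..<n}. cnj (yf k l) * yf k l)" using innr_y[OF k' k'] by simp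
  also have "\<dots> = of_real (\<Sum>l\<in>{0..<n}. (cmod (yf k l))^2)" by (rule sum_cnj_sq)
  finally have e: "pv k - av = of_real (\<Sum>l\<in>{0..<n}. (cmod (yf k l))^2)" .
  hence "Re (pv k) - ar = (\<Sum>l\<in>{0..<n}. (cmod (yf k l))^2)" unfolding ar_def
    by (metis Re_complex_of_real minus_complex.simps(1))
  thus "pv k - av = of_real (wr k)" "wr k \<ge> 0" using e k unfolding wr_def by (auto intro: sum_nonneg)
qed

lemma bessel_real: "ar + (\<Sum>k\<in>{1..s}. wr k) \<le> 1"
proof -
  have "Re (1 - (\<Sum>k\<in>{0..s}. Yv k k)) \<ge> 0" unfolding bessel_c by (auto intro: sum_nonneg)
  moreover have "(\<Sum>k\<in>{0..s}. Yv k k) = of_real (ar + (\<Sum>k\<in>{1..s}. wr k))"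
  proof -
    have "(\<Sum>k\<in>{0..s}. Yv k k) = Yv 0 0 + (\<Sum>k\<in>{1..s}. Yv k k)" by (simp add: sum.atLeast_Suc_atMost)
    also have "(\<Sum>k\<in>{1..s}. Yv k k) = (\<Sum>k\<in>{1..s}. of_real (wr k))"
      using pv_real(1) by (auto simp: Yv_def intro!: sum.cong)
    finally show ?thesis using av_real(1) by (simp add: Yv_def)
  qed
  ultimately show ?thesis by simp
qed

lemma gram_real: assumes k: "k \<in> {0..s}" and k': "k' \<in> {0..s}"
  shows "innr n (xv k) (xv k') = of_real (ar + (if k = k' then wr k else 0))"
  unfolding gram[OF k k'] using av_real(1) pv_real(1)[of k] k k' by (auto simp: wr_def)

lemma tr_real: "Re (tr (mat_adjoint Dm * Dm)) = (\<Sum>k\<in>{1..s}. 2*ar*wr k + (wr k)^2) / (real s)^2"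
proof -
  have "tr (mat_adjoint Dm * Dm) = (\<Sum>k\<in>{0..s}. \<Sum>k'\<in>{0..s}.
      of_real (cr k * cr k' * (ar + (if k = k' then wr k else 0))^2))"
    unfolding tr_formula
  proof (intro sum.cong refl)
    fix k k' assume k: "k \<in> {0..s}" and k': "k' \<in> {0..s}"
    show "cnj (of_real (cr k)) * of_real (cr k') * innr n (xv k) (xv k') * cnj (innr n (xv k) (xv k')) =
      of_real (cr k * cr k' * (ar + (if k = k' then wr k else 0))^2)"
      unfolding gram_real[OF k k'] by (simp add: power2_eq_square)
  qed
  hence "Re (tr (mat_adjoint Dm * Dm)) = (\<Sum>k\<in>{0..s}. \<Sum>k'\<in>{0..s}. cr k * cr k' * (ar + (if k = k' then wr k else 0))^2)"
    by (simp add: Re_sum)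
  also have "\<dots> = ar^2 * (\<Sum>k\<in>{0..s}. cr k)^2 + (\<Sum>k\<in>{0..s}. (cr k)^2 * (2*ar*wr k + (wr k)^2))"
    by (rule real_dsum)
  also have "(\<Sum>k\<in>{0..s}. cr k) = 0"
    using s2 by (simp add: sum.atLeast_Suc_atMost cr_def)
  also have "(\<Sum>k\<in>{0..s}. (cr k)^2 * (2*ar*wr k + (wr k)^2)) = (\<Sum>k\<in>{1..s}. (1/real s)^2 * (2*ar*wr k + (wr k)^2))"
    by (simp add: sum.atLeast_Suc_atMost cr_def wr_def)
  also have "\<dots> = (\<Sum>k\<in>{1..s}. 2*ar*wr k + (wr k)^2) / (real s)^2"
    by (simp add: sum_divide_distrib[symmetric] power_divide)
  finally show ?thesis by simp
qed

lemma tr_bound: "Re (tr (mat_adjoint Dm * Dm)) \<le> 1 / (real s)^2"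
proof -
  define W where "W = (\<Sum>k\<in>{1..s}. wr k)"
  have w0: "\<And>k. k \<in> {1..s} \<Longrightarrow> wr k \<ge> 0" using pv_real(2) by auto
  have W0: "W \<ge> 0" unfolding W_def using w0 by (auto intro: sum_nonneg)
  have WB: "ar + W \<le> 1" using bessel_real unfolding W_def .
  have "(\<Sum>k\<in>{1..s}. 2*ar*wr k + (wr k)^2) = 2*ar*W + (\<Sum>k\<in>{1..s}. (wr k)^2)"
    unfolding W_def by (simp add: sum.distrib sum_distrib_left)
  also have "\<dots> \<le> 2*ar*W + W^2" using sq_sum_le[of "{1..s}" wr] w0 unfolding W_def by auto
  also have "\<dots> \<le> 1"
  proof -
    have "2*ar*W + W^2 \<le> 2*ar*W + W^2 + ar^2" by simp
    also have "\<dots> = (ar + W)^2" by (simp add: power2_eq_square algebra_simps)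
    also have "\<dots> \<le> 1" using WB W0 av_real(2) by (simp add: power_le_one)
    finally show ?thesis .
  qed
  finally have "(\<Sum>k\<in>{1..s}. 2*ar*wr k + (wr k)^2) \<le> 1" .
  thus ?thesis unfolding tr_real using s2 by (simp add: divide_right_mono)
qed


lemma Xm_c: "Xm \<in> carrier_mat n (Suc s)" unfolding Xm_def by auto
lemma Ym_c: "Ym \<in> carrier_mat (Suc s) n" unfolding Ym_def by auto

lemma main_bound:
  "trace_dist (P * ketbra \<psi> * P) ((1 / of_nat s) \<cdot>\<^sub>m mat_sum n (\<lambda>i. Ps i * ketbra \<psi> * Ps i) {1..s})
    \<le> sqrt (1 / real s)"
proof -
  define T where "T = trace_norm Dm"
  have TD: "trace_dist (P * ketbra \<psi> * P) ((1 / of_nat s) \<cdot>\<^sub>m mat_sum n (\<lambda>i. Ps i * ketbra \<psi> * Ps i) {1..s}) = T / 2"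
    unfolding trace_dist_def T_def Dm_def ..
  note tb = trace_norm_bound[OF Dm_c Xm_c Ym_c Dm_factor]
  have T0: "T \<ge> 0" using tb(2) unfolding T_def .
  have "T^2 \<le> real (Suc s) * Re (tr (mat_adjoint Dm * Dm))" using tb(1) unfolding T_def .
  also have "\<dots> \<le> real (Suc s) * (1 / (real s)^2)" using tr_bound by (intro mult_left_mono) auto
  also have "\<dots> \<le> 4 * (1 / real s)"
  proof -
    have sp: "real s > 0" using s2 by simp
    have "real (Suc s) * (1 / (real s)^2) = (real s + 1) / real s * (1 / real s)"
      by (simp add: power2_eq_square)
    also have "\<dots> \<le> 4 * (1 / real s)"
      using s2 sp by (intro mult_right_mono) (auto simp: field_simps)
    finally show ?thesis .
  qed
  finally have "(T/2)^2 \<le> 1 / real s" by (simp add: power_divide)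
  hence "sqrt ((T/2)^2) \<le> sqrt (1 / real s)" by (rule real_sqrt_le_mono)
  thus ?thesis unfolding TD using T0 by simp
qed

end

theorem lemma1:
  fixes n s :: nat and Ps :: "nat \<Rightarrow> complex mat" and P :: "complex mat"
  assumes "s \<ge> 2"
    and "\<And>i. i \<in> {1..s} \<Longrightarrow> orth_proj n (Ps i)"
    and "orth_proj n P"
    and "\<And>i j. i \<in> {1..s} \<Longrightarrow> j \<in> {1..s} \<Longrightarrow> Ps i * Ps j = Ps j * Ps i"
    and "\<And>i. i \<in> {1..s} \<Longrightarrow> P * Ps i = P"
    and "\<And>i j. i \<in> {1..s} \<Longrightarrow> j \<in> {1..s} \<Longrightarrow> i \<noteq> j \<Longrightarrow> Ps i * Ps j = P"
  shows "\<forall>\<psi>. unit_vec_c n \<psi> \<longrightarrow>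
           trace_dist (P * ketbra \<psi> * P)
             ((1 / of_nat s) \<cdot>\<^sub>m mat_sum n (\<lambda>i. Ps i * ketbra \<psi> * Ps i) {1..s})
           \<le> sqrt (1 / real s)"
proof (intro allI impI)
  fix \<psi> assume psi: "unit_vec_c n \<psi>"
  show "trace_dist (P * ketbra \<psi> * P)
             ((1 / of_nat s) \<cdot>\<^sub>m mat_sum n (\<lambda>i. Ps i * ketbra \<psi> * Ps i) {1..s})
           \<le> sqrt (1 / real s)"
    by (rule main_bound[OF assms(1,2,3,5,6) psi])
qed

end
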